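(* Let $b$ be a $\kappa$--contracting geodesic ray in a proper CAT(0) space $X$, and let $m_b$ be the function provided by the Strongly Morse theorem applied to $Z=b$. Then for every $(q,Q)$--quasi-geodesic ray $\beta$ that $\kappa$--fellow travels $b$, we have $\beta\subset\mathcal N_\kappa(b,m_b(q,Q))$ and $b\subset\mathcal N_\kappa(\beta,2m_b(q,Q))$.
   Context: $\|x\|=d_X(\mathfrak o,x)$; $\kappa:[0,\infty)\to[1,\infty)$ monotone increasing, concave, sublinear; $\kappa(x):=\kappa(\|x\|)$; $\mathcal N_\kappa(Z,n)=\{x:d_X(x,Z)\le n\kappa(x)\}$. Quasi-geodesic rays are continuous quasi-isometric embeddings of $[0,\infty)$ starting at $\mathfrak o$; two rays $\kappa$--fellow travel if each lies in some $(\kappa,n)$--neighbourhood of the other. $Z$ is $\kappa$--contracting if there is $c_Z$ with $\operatorname{diam}(x_Z\cup y_Z)\le c_Z\kappa(x)$ whenever $d_X(x,y)\le d_X(x,Z)$. The Strongly Morse theorem: for a closed $\kappa$--contracting $Z\ni\mathfrak o$ there is $m_Z:\mathbb R^2\to\mathbb R$ such that for all $r,n>0$ and sublinear $\kappa'$ there is $R>0$ so that for every $(q,Q)$--quasi-geodesic ray $\eta$ with $m_Z(q,Q)\le r/(2\kappa(r))$, if $t_r,t_R$ are the first times with $\|\eta(t_r)\|=r$, $\|\eta(t_R)\|=R$ and $d_X(\eta(t_R),Z)\le n\kappa'(R)$, then $\eta([0,t_r])\subset\mathcal N_\kappa(Z,m_Z(q,Q))$. *)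

theory Defs
  imports "HOL-Analysis.Analysis"
begin

definition geodesic_segment :: "(real \<Rightarrow> 'a::metric_space) \<Rightarrow> 'a \<Rightarrow> 'a \<Rightarrow> bool" where
  "geodesic_segment g a b \<longleftrightarrow> g 0 = a \<and> g (dist a b) = b \<and>
     (\<forall>s\<in>{0..dist a b}. \<forall>t\<in>{0..dist a b}. dist (g s) (g t) = \<bar>s - t\<bar>)"

definition geodesic_space :: "'a::metric_space itself \<Rightarrow> bool" where
  "geodesic_space _ \<longleftrightarrow> (\<forall>a b::'a. \<exists>g. geodesic_segment g a b)"

definition proper_space :: "'a::metric_space itself \<Rightarrow> bool" where
  "proper_space _ \<longleftrightarrow> (\<forall>(x::'a) r. compact (cball x r))"

text \<open>Comparison point in the Euclidean plane (modelled as \<open>\<complex>\<close>) on the segment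
  from a' to b' of length L, at distance s from a'.\<close>
definition cmp_point :: "complex \<Rightarrow> complex \<Rightarrow> real \<Rightarrow> real \<Rightarrow> complex" where
  "cmp_point a' b' L s = a' + complex_of_real (s / L) * (b' - a')"

text \<open>CAT(0) inequality (Bridson--Haefliger): for every geodesic triangle with sides
  g1 (x to y), g2 (y to z), g3 (z to x) and every comparison triangle x', y', z'
  in the Euclidean plane, distances between points of the triangle are at most the
  distances between the corresponding comparison points.\<close>
definition CAT0 :: "'a::metric_space itself \<Rightarrow> bool" where
  "CAT0 T \<longleftrightarrow> geodesic_space T \<and>
    (\<forall>(x::'a) y z g1 g2 g3 x' y' z'.
       geodesic_segment g1 x y \<and> geodesic_segment g2 y z \<and> geodesic_segment g3 z x \<and>
       dist x' y' = dist x y \<and> dist y' z' = dist y z \<and> dist z' x' = dist z x \<longrightarrow>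
       (let sides = [(g1, x', y', dist x y), (g2, y', z', dist y z), (g3, z', x', dist z x)] in
        \<forall>(g, a', b', L) \<in> set sides. \<forall>(h, c', d', M) \<in> set sides.
          \<forall>s\<in>{0..L}. \<forall>t\<in>{0..M}.
            dist (g s) (h t) \<le> dist (cmp_point a' b' L s) (cmp_point c' d' M t)))"

definition sublinear_fn :: "(real \<Rightarrow> real) \<Rightarrow> bool" where
  "sublinear_fn k \<longleftrightarrow> (\<forall>t\<ge>0. k t \<ge> 1) \<and> mono_on {0..} k \<and> concave_on {0..} k \<and>
     ((\<lambda>t. k t / t) \<longlongrightarrow> 0) at_top"

text \<open>\<open>\<kappa>(x) = \<kappa>(\<parallel>x\<parallel>)\<close> with \<open>\<parallel>x\<parallel> = d(bp,x)\<close>;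
  \<open>\<N>_\<kappa>(Z,n) = {x. d(x,Z) \<le> n \<kappa>(x)}\<close>.\<close>
definition kappa_nbhd :: "'a::metric_space \<Rightarrow> (real \<Rightarrow> real) \<Rightarrow> 'a set \<Rightarrow> real \<Rightarrow> 'a set" where
  "kappa_nbhd bp k Z n = {x. infdist x Z \<le> n * k (dist bp x)}"

definition geodesic_ray :: "'a::metric_space \<Rightarrow> (real \<Rightarrow> 'a) \<Rightarrow> bool" where
  "geodesic_ray bp b \<longleftrightarrow> b 0 = bp \<and> (\<forall>s\<ge>0. \<forall>t\<ge>0. dist (b s) (b t) = \<bar>s - t\<bar>)"

definition quasi_geodesic_ray :: "'a::metric_space \<Rightarrow> real \<Rightarrow> real \<Rightarrow> (real \<Rightarrow> 'a) \<Rightarrow> bool" where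
  "quasi_geodesic_ray bp q Q e \<longleftrightarrow> q \<ge> 1 \<and> Q \<ge> 0 \<and> e 0 = bp \<and> continuous_on {0..} e \<and>
     (\<forall>s\<ge>0. \<forall>t\<ge>0. \<bar>s - t\<bar> / q - Q \<le> dist (e s) (e t) \<and> dist (e s) (e t) \<le> q * \<bar>s - t\<bar> + Q)"

definition kappa_fellow_travel :: "'a::metric_space \<Rightarrow> (real \<Rightarrow> real) \<Rightarrow> (real \<Rightarrow> 'a) \<Rightarrow> (real \<Rightarrow> 'a) \<Rightarrow> bool" where
  "kappa_fellow_travel bp k e b \<longleftrightarrow>
     (\<exists>n. e ` {0..} \<subseteq> kappa_nbhd bp k (b ` {0..}) n) \<and> (\<exists>n. b ` {0..} \<subseteq> kappa_nbhd bp k (e ` {0..}) n)"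

definition nearest_proj :: "'a::metric_space set \<Rightarrow> 'a \<Rightarrow> 'a set" where
  "nearest_proj Z x = {z\<in>Z. dist x z = infdist x Z}"

definition kappa_contracting :: "'a::metric_space \<Rightarrow> (real \<Rightarrow> real) \<Rightarrow> 'a set \<Rightarrow> bool" where
  "kappa_contracting bp k Z \<longleftrightarrow> (\<exists>c. \<forall>x y. dist x y \<le> infdist x Z \<longrightarrow>
      diameter (nearest_proj Z x \<union> nearest_proj Z y) \<le> c * k (dist bp x))"

definition first_time :: "'a::metric_space \<Rightarrow> (real \<Rightarrow> 'a) \<Rightarrow> real \<Rightarrow> real \<Rightarrow> bool" where
  "first_time bp e r t \<longleftrightarrow> t \<ge> 0 \<and> dist bp (e t) = r \<and> (\<forall>s\<in>{0..<t}. dist bp (e s) \<noteq> r)"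

text \<open>The conclusion of the Strongly Morse theorem for Z with function m.\<close>
definition strongly_morse_fn :: "'a::metric_space \<Rightarrow> (real \<Rightarrow> real) \<Rightarrow> 'a set \<Rightarrow> (real \<Rightarrow> real \<Rightarrow> real) \<Rightarrow> bool" where
  "strongly_morse_fn bp k Z m \<longleftrightarrow>
    (\<forall>r>0. \<forall>n>0. \<forall>k'. sublinear_fn k' \<longrightarrow>
      (\<exists>R>0. \<forall>e q Q. quasi_geodesic_ray bp q Q e \<and> m q Q \<le> r / (2 * k r) \<longrightarrow>
         (\<forall>tr tR. first_time bp e r tr \<and> first_time bp e R tR \<and> infdist (e tR) Z \<le> n * k' R \<longrightarrow>
            e ` {0..tr} \<subseteq> kappa_nbhd bp k Z (m q Q))))"

end

theory Submission
  imports Defs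
begin

lemma infdist_lt_ex:
  assumes "A \<noteq> {}" "infdist x A < d"
  shows "\<exists>a\<in>A. dist x a < d"
proof -
  have "bdd_below ((\<lambda>a. dist x a) ` A)" by (rule bdd_belowI[of _ 0]) auto
  thus ?thesis using assms by (simp add: infdist_notempty cINF_less_iff)
qed

lemma concave_ratio:
  assumes "sublinear_fn k" "0 < s" "s \<le> x"
  shows "s * k x \<le> x * k s"
proof -
  have c: "concave_on {0..} k" and k0: "k 0 \<ge> 1" using assms(1) by (auto simp: sublinear_fn_def)
  define v where "v = s / x"
  have x0: "x > 0" using assms by simp
  have v: "0 \<le> v" "v \<le> 1" using assms x0 by (auto simp: v_def)
  have "- k ((1 - v) *\<^sub>R 0 + v *\<^sub>R x) \<le> (1 - v) * (- k 0) + v * (- k x)"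
    using c v x0 unfolding concave_on_def convex_on_def
    apply (elim conjE)
    apply (drule bspec[of _ _ 0], simp)
    apply (drule bspec[of _ _ x], simp)
    apply (drule spec[of _ "1 - v"])
    apply (drule mp, simp)
    apply (drule spec[of _ v])
    by simp
  moreover have "(1 - v) *\<^sub>R 0 + v *\<^sub>R x = s" using x0 by (simp add: v_def)
  ultimately have "k s \<ge> (1 - v) * k 0 + v * k x" by simp
  moreover have "(1 - v) * k 0 \<ge> 0" using v k0 by simp
  ultimately have "k s \<ge> v * k x" by linarith
  hence "x * k s \<ge> x * (v * k x)" using x0 by simp
  thus ?thesis using x0 by (simp add: v_def)
qed

lemma sublinear_big:
  assumes "sublinear_fn k" "c \<ge> 0"
  shows "\<exists>r. r > B \<and> c * k r + B < r"
proof -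
  have lim: "((\<lambda>t. k t / t) \<longlongrightarrow> 0) at_top" and kp: "\<forall>t\<ge>0. k t \<ge> 1"
    using assms(1) by (auto simp: sublinear_fn_def)
  have "\<forall>\<^sub>F t in at_top. k t / t < 1 / (c + 1)"
    using order_tendstoD(2)[OF lim] assms(2) by simp
  moreover have "\<forall>\<^sub>F t in at_top. t > (\<bar>B\<bar> + 1) * (c + 1)" by (rule eventually_gt_at_top)
  ultimately have "\<forall>\<^sub>F t in at_top. k t / t < 1 / (c + 1) \<and> t > (\<bar>B\<bar> + 1) * (c + 1)"
    by (rule eventually_conj)
  then obtain N where N: "\<And>t. t \<ge> N \<Longrightarrow> k t / t < 1 / (c + 1) \<and> t > (\<bar>B\<bar> + 1) * (c + 1)"
    by (auto simp: eventually_at_top_linorder)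
  define r where "r = N"
  have h1: "k r / r < 1 / (c + 1)" and h2: "r > (\<bar>B\<bar> + 1) * (c + 1)" using N[of r] by (auto simp: r_def)
  have r0: "r > 0" using h2 assms(2) by (smt (verit) mult_pos_pos)
  have "k r < r / (c + 1)" using h1 r0 assms(2) by (simp add: field_simps)
  hence "c * k r \<le> c * (r / (c+1))" using assms(2) by (intro mult_left_mono) auto
  moreover have "B < r / (c + 1)"
  proof -
    have "B*c \<le> \<bar>B\<bar>*c" using assms(2) by (intro mult_right_mono) auto
    thus ?thesis using h2 assms(2) by (simp add: field_simps)
  qed
  moreover have "c * (r / (c+1)) + r / (c+1) = r"
  proof -
    have "c * (r / (c+1)) + r / (c+1) = (c+1) * (r / (c+1))" by (simp add: distrib_right add_divide_distrib)
    also have "\<dots> = r" using assms(2) by simp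
    finally show ?thesis .
  qed
  moreover have "B < r" using h2 assms(2)
    by (smt (verit, best) mult_le_cancel_left1 mult_nonneg_nonneg)
  ultimately show ?thesis by (intro exI[of _ r]) linarith
qed

lemma qg_norm_cont:
  assumes "quasi_geodesic_ray bp q Q e"
  shows "continuous_on {0..} (\<lambda>t. dist bp (e t))"
proof -
  have "continuous_on {0..} e" using assms by (simp add: quasi_geodesic_ray_def)
  thus ?thesis by (intro continuous_intros)
qed

lemma qg_reach:
  assumes "quasi_geodesic_ray bp q Q e" "\<rho> \<ge> 0"
  shows "\<exists>t\<ge>0. dist bp (e t) = \<rho>"
proof -
  have q: "q \<ge> 1" "Q \<ge> 0" "e 0 = bp" and
    lb: "\<And>s t. s \<ge> 0 \<Longrightarrow> t \<ge> 0 \<Longrightarrow> \<bar>s - t\<bar> / q - Q \<le> dist (e s) (e t)"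
    using assms(1) by (auto simp: quasi_geodesic_ray_def)
  define T where "T = q * (\<rho> + Q)"
  have T0: "T \<ge> 0" using q assms(2) by (simp add: T_def)
  have "\<bar>0 - T\<bar> / q - Q \<le> dist (e 0) (e T)" using lb[of 0 T] T0 by simp
  moreover have "\<bar>0 - T\<bar> / q - Q = \<rho>" using q T0 by (simp add: T_def)
  ultimately have fT: "\<rho> \<le> dist bp (e T)" using q by simp
  have "continuous_on {0..T} (\<lambda>t. dist bp (e t))"
    using qg_norm_cont[OF assms(1)] by (rule continuous_on_subset) auto
  from IVT'[of "\<lambda>t. dist bp (e t)" 0 \<rho> T, OF _ fT T0 this] q assms(2)
  show ?thesis by auto
qed

lemma qg_first_time:
  assumes "quasi_geodesic_ray bp q Q e" "\<rho> \<ge> 0"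
  shows "\<exists>t. first_time bp e \<rho> t"
proof -
  define S where "S = {0..} \<inter> (\<lambda>t. dist bp (e t)) -` {\<rho>}"
  have cl: "closed S" unfolding S_def
    by (rule continuous_closed_preimage[OF qg_norm_cont[OF assms(1)]]) auto
  have ne: "S \<noteq> {}" using qg_reach[OF assms] by (auto simp: S_def)
  have bb: "bdd_below S" by (rule bdd_belowI[of _ 0]) (auto simp: S_def)
  have I: "Inf S \<in> S" using closed_contains_Inf[OF ne bb cl] .
  have "\<forall>s\<in>{0..<Inf S}. dist bp (e s) \<noteq> \<rho>"
  proof
    fix s assume s: "s \<in> {0..<Inf S}"
    show "dist bp (e s) \<noteq> \<rho>"
    proof
      assume "dist bp (e s) = \<rho>"
      hence "s \<in> S" using s by (auto simp: S_def)
      hence "Inf S \<le> s" using bb by (simp add: cInf_lower)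
      thus False using s by simp
    qed
  qed
  thus ?thesis using I by (auto simp: first_time_def S_def)
qed

lemma cat0_conv:
  fixes b :: "real \<Rightarrow> 'a::metric_space"
  assumes cat: "CAT0 TYPE('a)" and gr: "geodesic_ray bp b" and u: "0 \<le> u1" "u1 \<le> s" "s \<le> u2"
  shows "dist (b s) p \<le> max (dist p (b u1)) (dist (b u2) p)"
proof (cases "u1 = u2")
  case True
  then have "s = u1" using u by simp
  then show ?thesis by (simp add: dist_commute)
next
  case False
  have iso: "\<And>v w. v \<ge> 0 \<Longrightarrow> w \<ge> 0 \<Longrightarrow> dist (b v) (b w) = \<bar>v - w\<bar>"
    using gr by (simp add: geodesic_ray_def)
  define L where "L = u2 - u1"
  have L0: "L > 0" using False u by (simp add: L_def)
  define g1 where "g1 = (\<lambda>v. b (u1 + v))"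
  have dxy: "dist (b u1) (b u2) = L" using iso[of u1 u2] u by (simp add: L_def)
  have seg1: "geodesic_segment g1 (b u1) (b u2)"
    unfolding geodesic_segment_def dxy g1_def using iso u by (auto simp: L_def)
  have gs: "geodesic_space TYPE('a)" using cat by (simp add: CAT0_def)
  obtain g2 where seg2: "geodesic_segment g2 (b u2) p" using gs by (auto simp: geodesic_space_def)
  obtain g3 where seg3: "geodesic_segment g3 p (b u1)" using gs by (auto simp: geodesic_space_def)
  define A where "A = dist p (b u1)"
  define C where "C = dist (b u2) p"
  have A0: "A \<ge> 0" and C0: "C \<ge> 0" by (auto simp: A_def C_def)
  have t1: "A \<le> L + C" unfolding A_def C_def dxy[symmetric]
    by (metis dist_commute dist_triangle add.commute)
  have t2: "C \<le> L + A" unfolding A_def C_def dxy[symmetric]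
    by (metis dist_commute dist_triangle)
  have t3: "L \<le> A + C" unfolding A_def C_def dxy[symmetric]
    by (metis dist_commute dist_triangle)
  define \<phi> where "\<phi> = (\<lambda>\<theta>. cmod (complex_of_real A * cis \<theta> - complex_of_real L))"
  have ph0: "\<phi> 0 = \<bar>A - L\<bar>" unfolding \<phi>_def
    by (metis cis_zero mult.right_neutral norm_of_real of_real_diff)
  have phpi: "\<phi> pi = A + L"
  proof -
    have "complex_of_real A * cis pi - complex_of_real L = - complex_of_real (A+L)" by simp
    hence "cmod (complex_of_real A * cis pi - complex_of_real L) = \<bar>A + L\<bar>"
      by (metis norm_minus_cancel norm_of_real)
    thus ?thesis using A0 L0 by (simp add: \<phi>_def)
  qed
  have "continuous_on {0..pi} \<phi>" unfolding \<phi>_def by (intro continuous_intros)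
  then obtain \<theta> where "\<phi> \<theta> = C"
    using IVT'[of \<phi> 0 C pi] ph0 phpi t1 t2 t3 pi_gt_zero by force
  define z' where "z' = complex_of_real A * cis \<theta>"
  have z1: "cmod z' = A" using A0 by (simp add: z'_def norm_mult)
  have z2: "cmod (complex_of_real L - z') = C"
    using \<open>\<phi> \<theta> = C\<close> by (simp add: \<phi>_def z'_def norm_minus_commute)
  define x' :: complex where "x' = 0"
  define y' :: complex where "y' = complex_of_real L"
  have H: "let sides = [(g1, x', y', dist (b u1) (b u2)), (g2, y', z', dist (b u2) p), (g3, z', x', dist p (b u1))] in
        \<forall>(g, a', b', L) \<in> set sides. \<forall>(h, c', d', M) \<in> set sides.
          \<forall>s\<in>{0..L}. \<forall>t\<in>{0..M}.
            dist (g s) (h t) \<le> dist (cmp_point a' b' L s) (cmp_point c' d' M t)"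
    using cat seg1 seg2 seg3 unfolding CAT0_def
    apply (elim conjE)
    apply (drule spec[of _ "b u1"], drule spec[of _ "b u2"], drule spec[of _ p])
    apply (drule spec[of _ g1], drule spec[of _ g2], drule spec[of _ g3])
    apply (drule spec[of _ x'], drule spec[of _ y'], drule spec[of _ z'])
    apply (erule mp)
    using z1 z2 dxy L0 by (auto simp: x'_def y'_def dist_norm A_def C_def norm_minus_commute)
  define v where "v = s - u1"
  have v: "v \<in> {0..L}" using u by (auto simp: v_def L_def)
  have C': "C \<in> {0..C}" using C0 by simp
  have main: "dist (g1 v) (g2 C) \<le> dist (cmp_point x' y' L v) (cmp_point y' z' C C)"
    using H v C' unfolding Let_def dxy C_def[symmetric] by auto
  have e1: "g1 v = b s" by (simp add: g1_def v_def)
  have e2: "g2 C = p" using seg2 by (simp add: geodesic_segment_def C_def)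
  have e3: "cmp_point x' y' L v = complex_of_real v" using L0 by (simp add: cmp_point_def x'_def y'_def)
  have e4: "cmp_point y' z' C C = z'"
  proof (cases "C = 0")
    case True
    then show ?thesis using z2 by (simp add: cmp_point_def y'_def)
  next
    case False
    then show ?thesis by (simp add: cmp_point_def)
  qed
  define lm where "lm = v / L"
  have lam: "0 \<le> lm" "lm \<le> 1" using v L0 by (auto simp: lm_def)
  have lL: "complex_of_real lm * complex_of_real L = complex_of_real v"
    proof -
    have "lm * L = v" using L0 by (simp add: lm_def)
    thus ?thesis by (metis of_real_mult)
  qed
  have eq: "complex_of_real v - z' = complex_of_real (1 - lm) * (- z') + complex_of_real lm * (complex_of_real L - z')"
    by (simp add: algebra_simps lL[symmetric])
  have n1: "cmod (complex_of_real (1 - lm) * (- z')) = (1 - lm) * A"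
    using lam z1 by (simp add: norm_mult del: of_real_diff)
  have n2: "cmod (complex_of_real lm * (complex_of_real L - z')) = lm * C"
    using lam z2 by (simp add: norm_mult)
  have "cmod (complex_of_real v - z') \<le> (1 - lm) * A + lm * C"
    unfolding eq using norm_triangle_ineq[of "complex_of_real (1 - lm) * (- z')" "complex_of_real lm * (complex_of_real L - z')"] n1 n2 by linarith
  also have "\<dots> \<le> (1 - lm) * max A C + lm * max A C" using lam
    by (intro add_mono mult_left_mono) auto
  also have "\<dots> = max A C" by (simp add: algebra_simps)
  finally have "dist (b s) p \<le> max A C"
    using main e1 e2 e3 e4 by (simp add: dist_norm)
  thus ?thesis by (simp add: A_def C_def)
qed

lemma arith2:
  assumes sl: "sublinear_fn k" and M: "M \<ge> 0" and s: "s > 0" and x: "x \<ge> 0"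
    and h1: "2 * M * k s < s" and h2: "x \<le> s + M * k x"
  shows "M * k x \<le> 2 * M * k s"
proof -
  have kp: "\<And>t. t \<ge> 0 \<Longrightarrow> k t \<ge> 1" and mo: "mono_on {0..} k" using sl by (auto simp: sublinear_fn_def)
  have kx2: "k x \<le> 2 * k s"
  proof (cases "x \<le> s")
    case True
    then have "k x \<le> k s" using mono_onD[OF mo] x s by auto
    then show ?thesis using kp[of s] s by linarith
  next
    case False
    have cr: "s * k x \<le> x * k s" using concave_ratio[OF sl s] False by simp
    have ks: "k s \<ge> 1" "k x \<ge> 1" using kp s x by auto
    have "x * k s \<le> (s + M * k x) * k s" using h2 ks by (intro mult_right_mono) auto
    also have "\<dots> = s * k s + (M * k s) * k x" by (simp add: algebra_simps)
    also have "(M * k s) * k x \<le> (s / 2) * k x" using h1 ks by (intro mult_right_mono) auto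
    finally have "s * k x \<le> s * k s + (s/2) * k x" using cr by linarith
    hence "s * (k x) \<le> s * (2 * k s)" by (simp add: algebra_simps)
    thus ?thesis using s by simp
  qed
  show ?thesis using mult_left_mono[OF kx2 M] by simp
qed

theorem corollary3p12:
  fixes bp :: "'a::metric_space" and k :: "real \<Rightarrow> real" and b :: "real \<Rightarrow> 'a"
    and m :: "real \<Rightarrow> real \<Rightarrow> real"
  assumes "CAT0 TYPE('a)" and "proper_space TYPE('a)"
    and "sublinear_fn k"
    and "geodesic_ray bp b"
    and "kappa_contracting bp k (b ` {0..})"
    and "strongly_morse_fn bp k (b ` {0..}) m"
  shows "\<forall>q Q e. quasi_geodesic_ray bp q Q e \<and> kappa_fellow_travel bp k e b \<longrightarrow>
           e ` {0..} \<subseteq> kappa_nbhd bp k (b ` {0..}) (m q Q) \<and>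
           b ` {0..} \<subseteq> kappa_nbhd bp k (e ` {0..}) (2 * m q Q)"
proof (intro allI impI, elim conjE)
  fix q Q e
  assume qg: "quasi_geodesic_ray bp q Q e" and ft: "kappa_fellow_travel bp k e b"
  note cat = assms(1) and sl = assms(3) and gr = assms(4) and sm = assms(6)
  define Z where "Z = b ` {0..}"
  define M where "M = m q Q"
  have kp: "\<And>t. t \<ge> 0 \<Longrightarrow> k t \<ge> 1" using sl by (auto simp: sublinear_fn_def)
  have iso: "\<And>v w. v \<ge> 0 \<Longrightarrow> w \<ge> 0 \<Longrightarrow> dist (b v) (b w) = \<bar>v - w\<bar>" and b0: "b 0 = bp"
    using gr by (auto simp: geodesic_ray_def)
  have nb: "\<And>s. s \<ge> 0 \<Longrightarrow> dist bp (b s) = s" using iso[of 0] b0 by auto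
  have q1: "q \<ge> 1" and Q0: "Q \<ge> 0" and e0: "e 0 = bp"
    and ub: "\<And>s t. s \<ge> 0 \<Longrightarrow> t \<ge> 0 \<Longrightarrow> dist (e s) (e t) \<le> q * \<bar>s - t\<bar> + Q"
    using qg by (auto simp: quasi_geodesic_ray_def)
  obtain n0 where n0: "e ` {0..} \<subseteq> kappa_nbhd bp k Z n0"
    using ft by (auto simp: kappa_fellow_travel_def Z_def)
  define n where "n = max n0 1"
  have n_pos: "n > 0" by (simp add: n_def)
  have part1: "\<And>t0. t0 \<ge> 0 \<Longrightarrow> infdist (e t0) Z \<le> M * k (dist bp (e t0))"
  proof -
    fix t0 :: real assume t0: "t0 \<ge> 0"
    define B where "B = q * t0 + Q"
    have B0: "B \<ge> 0" using q1 Q0 t0 by (simp add: B_def)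
    obtain r where r: "r > B" "\<bar>2 * M\<bar> * k r + B < r" using sublinear_big[OF sl, of "\<bar>2*M\<bar>" B] by auto
    have r0: "r > 0" using r B0 by simp
    have kr: "k r \<ge> 1" using kp r0 by simp
    have "2 * M * k r \<le> \<bar>2 * M\<bar> * k r" using kr by (intro mult_right_mono) auto
    hence "2 * M * k r < r" using r B0 by linarith
    hence Mr: "M \<le> r / (2 * k r)" using kr by (simp add: field_simps)
    from sm[unfolded strongly_morse_fn_def Z_def[symmetric], rule_format, OF r0 n_pos sl]
    obtain R where R: "R > 0" and HR: "\<forall>e q Q. quasi_geodesic_ray bp q Q e \<and> m q Q \<le> r / (2 * k r) \<longrightarrow>
         (\<forall>tr tR. first_time bp e r tr \<and> first_time bp e R tR \<and> infdist (e tR) Z \<le> n * k R \<longrightarrow>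
            e ` {0..tr} \<subseteq> kappa_nbhd bp k Z (m q Q))" by blast
    obtain tr where tr: "first_time bp e r tr" using qg_first_time[OF qg] r0 by force
    obtain tR where tR: "first_time bp e R tR" using qg_first_time[OF qg] R by force
    have tR0: "tR \<ge> 0" and ntR: "dist bp (e tR) = R" using tR by (auto simp: first_time_def)
    have "e tR \<in> kappa_nbhd bp k Z n0" using n0 tR0 by auto
    hence "infdist (e tR) Z \<le> n0 * k R" using ntR by (simp add: kappa_nbhd_def)
    also have "\<dots> \<le> n * k R" using kp[of R] R by (intro mult_right_mono) (auto simp: n_def)
    finally have idR: "infdist (e tR) Z \<le> n * k R" .
    have sub: "e ` {0..tr} \<subseteq> kappa_nbhd bp k Z M"
      unfolding M_def apply (rule HR[rule_format])
      using qg Mr tr tR idR M_def by auto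
    have tr0: "tr \<ge> 0" and ntr: "dist bp (e tr) = r" using tr by (auto simp: first_time_def)
    have "t0 \<le> tr"
    proof (rule ccontr)
      assume "\<not> t0 \<le> tr"
      hence "q * tr \<le> q * t0" using q1 by (intro mult_left_mono) auto
      moreover have "dist bp (e tr) \<le> q * tr + Q" using ub[of 0 tr] tr0 e0 by simp
      ultimately show False using ntr r unfolding B_def by linarith
    qed
    hence "e t0 \<in> kappa_nbhd bp k Z M" using sub t0 by auto
    thus "infdist (e t0) Z \<le> M * k (dist bp (e t0))" by (simp add: kappa_nbhd_def)
  qed
  have M0: "M \<ge> 0"
  proof -
    have "bp \<in> Z" using b0 by (auto simp: Z_def)
    hence "0 \<le> M * k (dist bp (e 0))" using part1[of 0] e0 by simp
    moreover have "k (dist bp (e 0)) \<ge> 1" using kp by simp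
    ultimately show ?thesis by (simp add: zero_le_mult_iff)
  qed
  have part2: "\<And>s. s \<ge> 0 \<Longrightarrow> infdist (b s) (e ` {0..}) \<le> 2 * M * k s"
  proof -
    fix s :: real assume s0: "s \<ge> 0"
    show "infdist (b s) (e ` {0..}) \<le> 2 * M * k s"
    proof (cases "s \<le> 2 * M * k s")
      case True
      have "infdist (b s) (e ` {0..}) \<le> dist (b s) (e 0)" by (rule infdist_le) auto
      also have "\<dots> = s" using nb[OF s0] e0 by (simp add: dist_commute)
      finally show ?thesis using True by linarith
    next
      case False
      have ks0: "k s \<ge> 1" using kp s0 by simp
      have s: "s > 0" using False M0 ks0 by (smt (verit) mult_nonneg_nonneg)
      define Z1 where "Z1 = b ` {0..s}"
      define Z2 where "Z2 = b ` {s..}"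
      have "{0..} = {0..s} \<union> {s..}" using s0 by auto
      hence ZU: "Z = Z1 \<union> Z2" unfolding Z_def Z1_def Z2_def by (simp add: image_Un)
      have Z1ne: "Z1 \<noteq> {}" and Z2ne: "Z2 \<noteq> {}" using s0 by (auto simp: Z1_def Z2_def)
      have idmin: "\<And>y. infdist y Z = min (infdist y Z1) (infdist y Z2)"
        unfolding ZU by (rule infdist_Un_min[OF Z1ne Z2ne])
      define f where "f = (\<lambda>t. infdist (e t) Z1)"
      define g where "g = (\<lambda>t. infdist (e t) Z2)"
      obtain \<rho> where rho: "\<rho> > s" "M * k \<rho> + s < \<rho>" using sublinear_big[OF sl M0, of s] by auto
      obtain T where T0: "T \<ge> 0" and nT: "dist bp (e T) = \<rho>" using qg_reach[OF qg, of \<rho>] rho s by auto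
      have fT: "f T \<ge> \<rho> - s"
      proof (rule ccontr)
        assume "\<not> f T \<ge> \<rho> - s"
        then obtain a where a: "a \<in> Z1" "dist (e T) a < \<rho> - s"
          using infdist_lt_ex[OF Z1ne] unfolding f_def by force
        then obtain u where u: "u \<in> {0..s}" "a = b u" by (auto simp: Z1_def)
        have "dist bp (e T) \<le> dist bp a + dist (e T) a" by (metis dist_commute dist_triangle)
        moreover have "dist bp a = u" using u nb by auto
        ultimately show False using a u nT by auto
      qed
      have "min (f T) (g T) \<le> M * k \<rho>" using part1[OF T0] nT idmin unfolding f_def g_def by simp
      hence hT: "f T - g T \<ge> 0" using fT rho by linarith
      have "e 0 \<in> Z1" unfolding Z1_def using e0 b0 s0 by (metis atLeastAtMost_iff image_eqI order_refl)
      hence f0: "f 0 = 0" by (simp add: f_def)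
      have h0: "f 0 - g 0 \<le> 0" using f0 by (simp add: g_def infdist_nonneg)
      have "continuous_on {0..} e" using qg by (simp add: quasi_geodesic_ray_def)
      hence "continuous_on {0..} (\<lambda>t. f t - g t)" unfolding f_def g_def by (intro continuous_intros)
      hence "continuous_on {0..T} (\<lambda>t. f t - g t)" by (rule continuous_on_subset) auto
      then obtain t where t: "0 \<le> t" "t \<le> T" "f t - g t = 0"
        using IVT'[of "\<lambda>t. f t - g t" 0 0 T] h0 hT T0 by auto
      define x where "x = dist bp (e t)"
      define D where "D = M * k x"
      have fD: "f t \<le> D" and gD: "g t \<le> D"
        using part1[OF t(1)] idmin[of "e t"] t(3) unfolding f_def g_def D_def x_def by auto
      have dD: "dist (b s) (e t) \<le> D"
      proof (rule field_le_epsilon)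
        fix \<epsilon> :: real assume \<epsilon>: "\<epsilon> > 0"
        obtain a1 where a1: "a1 \<in> Z1" "dist (e t) a1 < D + \<epsilon>"
          using infdist_lt_ex[OF Z1ne, of "e t" "D + \<epsilon>"] fD \<epsilon> unfolding f_def by force
        obtain a2 where a2: "a2 \<in> Z2" "dist (e t) a2 < D + \<epsilon>"
          using infdist_lt_ex[OF Z2ne, of "e t" "D + \<epsilon>"] gD \<epsilon> unfolding g_def by force
        obtain u1 where u1: "u1 \<in> {0..s}" "a1 = b u1" using a1 by (auto simp: Z1_def)
        obtain u2 where u2: "u2 \<in> {s..}" "a2 = b u2" using a2 by (auto simp: Z2_def)
        have "dist (b s) (e t) \<le> max (dist (e t) (b u1)) (dist (b u2) (e t))"
          using cat0_conv[OF cat gr, of u1 s u2 "e t"] u1 u2 by auto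
        thus "dist (b s) (e t) \<le> D + \<epsilon>" using a1 a2 u1 u2 by (auto simp: dist_commute)
      qed
      have x0: "x \<ge> 0" by (simp add: x_def)
      have "x \<le> dist bp (b s) + dist (b s) (e t)" unfolding x_def by (rule dist_triangle)
      hence xb: "x \<le> s + M * k x" using dD nb[OF s0] by (simp add: D_def)
      have "D \<le> 2 * M * k s" unfolding D_def
        using arith2[OF sl M0 s x0 _ xb] False by linarith
      moreover have "infdist (b s) (e ` {0..}) \<le> dist (b s) (e t)" using t by (intro infdist_le) auto
      ultimately show ?thesis using dD by linarith
    qed
  qed
  show "e ` {0..} \<subseteq> kappa_nbhd bp k (b ` {0..}) (m q Q) \<and>
           b ` {0..} \<subseteq> kappa_nbhd bp k (e ` {0..}) (2 * m q Q)"
  proof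
    show "e ` {0..} \<subseteq> kappa_nbhd bp k (b ` {0..}) (m q Q)"
      using part1 unfolding Z_def M_def by (auto simp: kappa_nbhd_def)
    show "b ` {0..} \<subseteq> kappa_nbhd bp k (e ` {0..}) (2 * m q Q)"
      using part2 nb unfolding M_def by (auto simp: kappa_nbhd_def mult.assoc)
  qed
qed

end
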